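(* Let $G=(V,E)$ be a claw-free graph, let $v_1,v_2\in V$ with $v_1v_2\notin E$, and let $w_1,w_2\in N(v_1)\cap N(v_2)$ with $w_1w_2\notin E$. Then $N[v_1]\cup N[v_2]=N[w_1]\cup N[w_2]$.
   Context: Graphs are finite, simple, undirected; claw-free means no induced $K_{1,3}$. $N(x)$ is the open and $N[x]=N(x)\cup\{x\}$ the closed neighbourhood of $x$. *)

theory Defs
  imports Main
begin

definition simple_graph :: "'a set \<Rightarrow> ('a \<Rightarrow> 'a \<Rightarrow> bool) \<Rightarrow> bool" where
  "simple_graph V E \<longleftrightarrow> finite V \<and> (\<forall>x y. E x y \<longrightarrow> E y x) \<and> (\<forall>x. \<not> E x x)
     \<and> (\<forall>x y. E x y \<longrightarrow> x \<in> V \<and> y \<in> V)"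

definition open_nbhd :: "'a set \<Rightarrow> ('a \<Rightarrow> 'a \<Rightarrow> bool) \<Rightarrow> 'a \<Rightarrow> 'a set" where
  "open_nbhd V E x = {y \<in> V. E x y}"

definition closed_nbhd :: "'a set \<Rightarrow> ('a \<Rightarrow> 'a \<Rightarrow> bool) \<Rightarrow> 'a \<Rightarrow> 'a set" where
  "closed_nbhd V E x = insert x (open_nbhd V E x)"

definition claw_free :: "'a set \<Rightarrow> ('a \<Rightarrow> 'a \<Rightarrow> bool) \<Rightarrow> bool" where
  "claw_free V E \<longleftrightarrow> \<not> (\<exists>c\<in>V. \<exists>a\<in>V. \<exists>b\<in>V. \<exists>d\<in>V.
      E c a \<and> E c b \<and> E c d \<and> a \<noteq> b \<and> a \<noteq> d \<and> b \<noteq> d \<and>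
      \<not> E a b \<and> \<not> E a d \<and> \<not> E b d)"

end

theory Submission
  imports Defs
begin

theorem lemma7:
  fixes V :: "'a set" and E :: "'a \<Rightarrow> 'a \<Rightarrow> bool"
  assumes "simple_graph V E" and "claw_free V E"
    and "v1 \<in> V" and "v2 \<in> V" and "v1 \<noteq> v2" and "\<not> E v1 v2"
    and "w1 \<in> open_nbhd V E v1 \<inter> open_nbhd V E v2"
    and "w2 \<in> open_nbhd V E v1 \<inter> open_nbhd V E v2"
    and "w1 \<noteq> w2" and "\<not> E w1 w2"
  shows "closed_nbhd V E v1 \<union> closed_nbhd V E v2 = closed_nbhd V E w1 \<union> closed_nbhd V E w2"
proof -
  have sym: "\<And>x y. E x y \<Longrightarrow> E y x" and irr: "\<And>x. \<not> E x x"
    and inV: "\<And>x y. E x y \<Longrightarrow> x \<in> V \<and> y \<in> V"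
    using assms(1) unfolding simple_graph_def by blast+
  have cf: "\<And>c a b d. E c a \<Longrightarrow> E c b \<Longrightarrow> E c d \<Longrightarrow> a \<noteq> b \<Longrightarrow> a \<noteq> d \<Longrightarrow> b \<noteq> d
     \<Longrightarrow> \<not> E a b \<Longrightarrow> \<not> E a d \<Longrightarrow> \<not> E b d \<Longrightarrow> False"
    using assms(2) inV unfolding claw_free_def by blast
  have e: "E v1 w1" "E v2 w1" "E v1 w2" "E v2 w2" "w1 \<in> V" "w2 \<in> V"
    using assms(7,8) unfolding open_nbhd_def by auto
  have A: "E w1 x \<or> E w2 x" if "E v x" "v = v1 \<or> v = v2" "x \<noteq> w1" "x \<noteq> w2" for v x
  proof (rule ccontr)
    assume n: "\<not> (E w1 x \<or> E w2 x)"
    show False using that n e assms(9,10) sym by (intro cf[of v x w1 w2]) (auto)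
  qed
  have B: "E v1 x \<or> E v2 x" if "E w x" "w = w1 \<or> w = w2" "x \<noteq> v1" "x \<noteq> v2" for w x
  proof (rule ccontr)
    assume n: "\<not> (E v1 x \<or> E v2 x)"
    show False using that n e assms(5,6) sym by (intro cf[of w x v1 v2]) (auto)
  qed
  show ?thesis
  proof (rule set_eqI)
    fix x
    show "x \<in> closed_nbhd V E v1 \<union> closed_nbhd V E v2 \<longleftrightarrow> x \<in> closed_nbhd V E w1 \<union> closed_nbhd V E w2"
    proof
      assume h: "x \<in> closed_nbhd V E v1 \<union> closed_nbhd V E v2"
      hence "x = v1 \<or> x = v2 \<or> E v1 x \<or> E v2 x" and xV: "x \<in> V"
        unfolding closed_nbhd_def open_nbhd_def using assms(3,4) by auto
      hence "x = w1 \<or> x = w2 \<or> E w1 x \<or> E w2 x"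
        using A[of v1 x] A[of v2 x] e sym by blast
      thus "x \<in> closed_nbhd V E w1 \<union> closed_nbhd V E w2"
        unfolding closed_nbhd_def open_nbhd_def using xV by blast
    next
      assume h: "x \<in> closed_nbhd V E w1 \<union> closed_nbhd V E w2"
      hence "x = w1 \<or> x = w2 \<or> E w1 x \<or> E w2 x" and xV: "x \<in> V"
        unfolding closed_nbhd_def open_nbhd_def using e by auto
      hence "x = v1 \<or> x = v2 \<or> E v1 x \<or> E v2 x"
        using B[of w1 x] B[of w2 x] e by blast
      thus "x \<in> closed_nbhd V E v1 \<union> closed_nbhd V E v2"
        unfolding closed_nbhd_def open_nbhd_def using xV by blast
    qed
  qed
qed

end
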